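(* Let $\mathbb{F}$ be a field, $d\geq3$ and $V$ a vector space over $\mathbb{F}$ of dimension $d+1$. Let $E^*_0,\dots,E^*_d$ be a system of mutually orthogonal idempotents in $\mathrm{End}(V)$ and $A\in\mathrm{End}(V)$ with $E^*_iAE^*_j=0$ if $|i-j|>1$ and $E^*_iAE^*_j\neq0$ if $|i-j|=1$. Assume $A$ is multiplicity-free and bipartite with primitive idempotents $E_0,\dots,E_d$ and eigenvalues $\theta_0,\dots,\theta_d$. Let $\theta^*_0,\dots,\theta^*_d\in\mathbb{F}$ be mutually distinct and $A^*=\sum_i\theta^*_iE^*_i$. Assume $E_0$ is normalizing and that in $\Delta$ the vertex $E_0$ is adjacent to $E_1$ and no other vertex. Fix a basis $v_0,\dots,v_d$ with $v_i\in E^*_iV$, and let $b_i,c_i,\alpha_i$ be as in the context. Then for $1\le i\le d-1$, $$b_i=\frac{\theta_1(\theta^*_i-\theta^*_0)-\theta_0(\theta^*_{i-1}-\theta^*_1)}{\theta^*_{i+1}-\theta^*_{i-1}}\cdot\frac{\alpha_i}{\alpha_{i+1}},\qquad c_i=\frac{\theta_0(\theta^*_{i+1}-\theta^*_1)-\theta_1(\theta^*_i-\theta^*_0)}{\theta^*_{i+1}-\theta^*_{i-1}}\cdot\frac{\alpha_i}{\alpha_{i-1}}.$$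
   Context: A system of mutually orthogonal idempotents: $E^*_iE^*_j=\delta_{ij}E^*_i$, $\operatorname{rank}E^*_i=1$. $A$ multiplicity-free: $d+1$ distinct eigenvalues in $\mathbb{F}$; $E_i$ is the projection onto the $\theta_i$-eigenspace along the other eigenspaces. Bipartite: $\operatorname{tr}(E^*_iA)=0$ for all $i$. $\Delta$: graph on $E_0,\dots,E_d$ with $E_i\neq E_j$ adjacent iff $E_iA^*E_j\neq0$. The matrix $Y$ representing $A$ w.r.t. a basis $v_0,\dots,v_d$ satisfies $Av_j=\sum_iY_{ij}v_i$. An eigenvalue $\theta$ is normalizing if some basis $v_i\in E^*_iV$ makes every row sum of the matrix representing $A$ equal to $\theta$; $E_i$ is normalizing if $\theta_i$ is. For the fixed basis $v_i\in E^*_iV$, the matrix of $A$ is tridiagonal with zero diagonal; $b_i$ ($0\le i\le d-1$) denotes its $(i,i+1)$-entry and $c_i$ ($1\le i\le d$) its $(i,i-1)$-entry (all nonzero); set $b_d=c_0=0$. The cosine sequence $\alpha_0,\dots,\alpha_d$ for $\theta_0$ is defined by $\alpha_0=1$ and $c_i\alpha_{i-1}+b_i\alpha_{i+1}=\theta_0\alpha_i$ for $0\le i\le d-1$; equivalently $\sum_i\alpha_iv_i$ is the eigenvector of $A$ for $\theta_0$ with $\alpha_0=1$. Since $E_0$ is normalizing, all $\alpha_i$ are nonzero. *)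

theory Defs
  imports "Jordan_Normal_Form.Matrix" "Jordan_Normal_Form.Char_Poly" "Jordan_Normal_Form.DL_Rank"
begin

(* V = F^(d+1) (column vectors of dimension n = d+1); End(V) = n x n matrices. *)

definition mat_trace :: "'a::comm_ring_1 mat \<Rightarrow> 'a" where
  "mat_trace M = (\<Sum>i<dim_row M. M $$ (i,i))"

definition in_image :: "'a::comm_ring_1 mat \<Rightarrow> 'a vec \<Rightarrow> bool" where
  "in_image M v = (\<exists>w \<in> carrier_vec (dim_col M). v = M *\<^sub>v w)"

definition lincomb_vec :: "nat \<Rightarrow> (nat \<Rightarrow> 'a::comm_ring_1) \<Rightarrow> (nat \<Rightarrow> 'a vec) \<Rightarrow> nat set \<Rightarrow> 'a vec" where
  "lincomb_vec n c u I = vec n (\<lambda>r. \<Sum>i\<in>I. c i * (u i $ r))"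

definition lincomb_mat :: "nat \<Rightarrow> (nat \<Rightarrow> 'a::comm_ring_1) \<Rightarrow> (nat \<Rightarrow> 'a mat) \<Rightarrow> nat set \<Rightarrow> 'a mat" where
  "lincomb_mat n c M I = mat n n (\<lambda>(r,s). \<Sum>i\<in>I. c i * (M i $$ (r,s)))"

(* E is the projection onto the th(i)-eigenspace of A along the other eigenspaces
   th(j), j \<le> d, j \<noteq> i (n = d+1) *)
definition eig_projection :: "nat \<Rightarrow> 'a::field mat \<Rightarrow> (nat \<Rightarrow> 'a) \<Rightarrow> nat \<Rightarrow> 'a mat \<Rightarrow> bool" where
  "eig_projection d A th i E =
     (E \<in> carrier_mat (d+1) (d+1) \<and>
      (\<forall>x \<in> carrier_vec (d+1).
         A *\<^sub>v (E *\<^sub>v x) = th i \<cdot>\<^sub>v (E *\<^sub>v x) \<and>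
         (\<exists>w. (\<forall>j\<le>d. j \<noteq> i \<longrightarrow> w j \<in> carrier_vec (d+1) \<and> A *\<^sub>v w j = th j \<cdot>\<^sub>v w j) \<and>
              x - E *\<^sub>v x = lincomb_vec (d+1) (\<lambda>_. 1) w ({..d} - {i}))))"

definition represents :: "nat \<Rightarrow> 'a::field mat \<Rightarrow> (nat \<Rightarrow> 'a vec) \<Rightarrow> (nat \<Rightarrow> nat \<Rightarrow> 'a) \<Rightarrow> bool" where
  "represents d A u Y = (\<forall>j\<le>d. A *\<^sub>v u j = lincomb_vec (d+1) (\<lambda>i. Y i j) u {..d})"

(* u_0..u_d is a basis with u_i \<in> E*_i V (nonzero vectors in the rank-one images
   of mutually orthogonal idempotents; they are automatically a basis) *)
definition adapted_basis :: "nat \<Rightarrow> (nat \<Rightarrow> 'a::field mat) \<Rightarrow> (nat \<Rightarrow> 'a vec) \<Rightarrow> bool" where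
  "adapted_basis d Es u = (\<forall>i\<le>d. u i \<in> carrier_vec (d+1) \<and> u i \<noteq> 0\<^sub>v (d+1) \<and> in_image (Es i) (u i))"

definition normalizing :: "nat \<Rightarrow> 'a::field mat \<Rightarrow> (nat \<Rightarrow> 'a mat) \<Rightarrow> 'a \<Rightarrow> bool" where
  "normalizing d A Es \<theta> = (\<exists>u Y. adapted_basis d Es u \<and> represents d A u Y \<and>
       (\<forall>i\<le>d. (\<Sum>j\<le>d. Y i j) = \<theta>))"

end

theory Submission
  imports Defs
begin


lemma lincomb_carrier[simp]: "lincomb_vec n c u I \<in> carrier_vec n"
  "dim_vec (lincomb_vec n c u I) = n"
  by (auto simp: lincomb_vec_def)

lemma lincomb_index[simp]: "r < n \<Longrightarrow> lincomb_vec n c u I $ r = (\<Sum>i\<in>I. c i * (u i $ r))"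
  by (simp add: lincomb_vec_def)

lemma mat_lincomb:
  assumes M: "M \<in> carrier_mat m n" and u: "\<forall>i\<in>I. u i \<in> carrier_vec n"
  shows "M *\<^sub>v lincomb_vec n c u I = lincomb_vec m c (\<lambda>i. M *\<^sub>v u i) I"
proof (rule eq_vecI)
  fix r assume r: "r < dim_vec (lincomb_vec m c (\<lambda>i. M *\<^sub>v u i) I)"
  hence rm: "r < m" by simp
  have "(M *\<^sub>v lincomb_vec n c u I) $ r = (\<Sum>k<n. M $$ (r,k) * (\<Sum>i\<in>I. c i * (u i $ k)))"
    using M rm by (simp add: scalar_prod_def lessThan_atLeast0)
  also have "\<dots> = (\<Sum>i\<in>I. c i * (\<Sum>k<n. M $$ (r,k) * u i $ k))"
    by (simp add: sum_distrib_left sum_distrib_right mult.assoc mult.left_commute sum.swap[of _ I])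
  also have "\<dots> = lincomb_vec m c (\<lambda>i. M *\<^sub>v u i) I $ r"
    using M rm u by (auto simp: scalar_prod_def lessThan_atLeast0 intro!: sum.cong)
  finally show "(M *\<^sub>v lincomb_vec n c u I) $ r = lincomb_vec m c (\<lambda>i. M *\<^sub>v u i) I $ r" .
qed (use M in auto)

lemma lincomb_single:
  assumes I: "finite I" "j \<in> I" and u: "\<forall>k\<in>I-{j}. u k = 0\<^sub>v n" "u j \<in> carrier_vec n"
  shows "lincomb_vec n c u I = c j \<cdot>\<^sub>v u j"
proof (rule eq_vecI)
  fix r assume "r < dim_vec (c j \<cdot>\<^sub>v u j)"
  hence r: "r < n" using u by simp
  have "(\<Sum>i\<in>I. c i * (u i $ r)) = c j * (u j $ r) + (\<Sum>i\<in>I-{j}. c i * (u i $ r))"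
    using I by (simp add: sum.remove)
  also have "(\<Sum>i\<in>I-{j}. c i * (u i $ r)) = 0" using u r by (intro sum.neutral) auto
  finally show "lincomb_vec n c u I $ r = (c j \<cdot>\<^sub>v u j) $ r" using r u by simp
qed (use u in auto)

lemma lincomb_mat_vec:
  assumes "\<forall>i\<in>I. Ms i \<in> carrier_mat n n" "x \<in> carrier_vec n"
  shows "lincomb_mat n c Ms I *\<^sub>v x = lincomb_vec n c (\<lambda>i. Ms i *\<^sub>v x) I"
proof (rule eq_vecI)
  fix r assume "r < dim_vec (lincomb_vec n c (\<lambda>i. Ms i *\<^sub>v x) I)"
  hence r: "r < n" by simp
  have "(lincomb_mat n c Ms I *\<^sub>v x) $ r = (\<Sum>k<n. (\<Sum>i\<in>I. c i * Ms i $$ (r,k)) * x $ k)"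
    using r assms by (simp add: lincomb_mat_def scalar_prod_def lessThan_atLeast0)
  also have "\<dots> = (\<Sum>i\<in>I. c i * (\<Sum>k<n. Ms i $$ (r,k) * x $ k))"
    by (simp add: sum_distrib_left sum_distrib_right mult.assoc mult.left_commute sum.swap[of _ I])
  also have "\<dots> = lincomb_vec n c (\<lambda>i. Ms i *\<^sub>v x) I $ r"
    using r assms by (auto simp: scalar_prod_def lessThan_atLeast0 intro!: sum.cong)
  finally show "(lincomb_mat n c Ms I *\<^sub>v x) $ r = lincomb_vec n c (\<lambda>i. Ms i *\<^sub>v x) I $ r" .
qed (auto simp: lincomb_mat_def)

lemma mat_unit_index: "(X::'a::field mat) \<in> carrier_mat n n \<Longrightarrow> i < n \<Longrightarrow> r < n \<Longrightarrow> (X *\<^sub>v unit_vec n r) $ i = X $$ (i,r)"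
  by (simp add: scalar_prod_right_unit)

lemma mat_zero_if_vec:
  assumes X: "(X::'a::field mat) \<in> carrier_mat n n" and h: "\<forall>x\<in>carrier_vec n. X *\<^sub>v x = 0\<^sub>v n"
  shows "X = 0\<^sub>m n n"
proof (rule eq_matI)
  fix i j assume "i < dim_row (0\<^sub>m n n :: 'a mat)" "j < dim_col (0\<^sub>m n n :: 'a mat)"
  hence ij: "i < n" "j < n" by auto
  have "X $$ (i,j) = (X *\<^sub>v unit_vec n j) $ i" using X ij by (simp add: scalar_prod_right_unit)
  also have "\<dots> = 0" using h ij by simp
  finally show "X $$ (i,j) = (0\<^sub>m n n :: 'a mat) $$ (i,j)" using ij by simp
qed (use X in auto)

lemma mat_vec_zero[simp]: "X \<in> carrier_mat m n \<Longrightarrow> X *\<^sub>v 0\<^sub>v n = 0\<^sub>v m"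
  by (intro eq_vecI) auto

lemma mat3_vec: "X \<in> carrier_mat n n \<Longrightarrow> Y \<in> carrier_mat n n \<Longrightarrow> Z \<in> carrier_mat n n \<Longrightarrow> x \<in> carrier_vec n
  \<Longrightarrow> (X * Y * Z) *\<^sub>v x = X *\<^sub>v (Y *\<^sub>v (Z *\<^sub>v x))"
  by (subst assoc_mult_mat_vec[of "X * Y" n n Z n]) auto

lemma mat2_vec: "X \<in> carrier_mat n n \<Longrightarrow> Y \<in> carrier_mat n n \<Longrightarrow> x \<in> carrier_vec n
  \<Longrightarrow> (X * Y) *\<^sub>v x = X *\<^sub>v (Y *\<^sub>v x)"
  by auto

lemma zero_mat_vec[simp]: "x \<in> carrier_vec n \<Longrightarrow> 0\<^sub>m m n *\<^sub>v x = (0\<^sub>v m :: 'a::semiring_0 vec)"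
  by (intro eq_vecI) (auto simp: scalar_prod_def)

lemma smult_0_vec[simp]: "x \<in> carrier_vec n \<Longrightarrow> (0::'a::semiring_0) \<cdot>\<^sub>v x = 0\<^sub>v n"
  by (intro eq_vecI) auto

lemma smult_vec_0[simp]: "(a::'a::semiring_0) \<cdot>\<^sub>v 0\<^sub>v n = 0\<^sub>v n"
  by (intro eq_vecI) auto


theorem lemma7p6:
  fixes d :: nat
    and Es :: "nat \<Rightarrow> 'a::field mat"
    and A As :: "'a mat"
    and E :: "nat \<Rightarrow> 'a mat"
    and th ths :: "nat \<Rightarrow> 'a"
    and v :: "nat \<Rightarrow> 'a vec"
    and Y :: "nat \<Rightarrow> nat \<Rightarrow> 'a"
    and \<alpha> :: "nat \<Rightarrow> 'a"
  assumes d3: "d \<ge> 3"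
    and Es_carrier: "\<forall>i\<le>d. Es i \<in> carrier_mat (d+1) (d+1)"
    and Es_orth: "\<forall>i\<le>d. \<forall>j\<le>d. Es i * Es j = (if i = j then Es i else 0\<^sub>m (d+1) (d+1))"
    and Es_rank: "\<forall>i\<le>d. vec_space.rank (d+1) (Es i) = 1"
    and A_carrier: "A \<in> carrier_mat (d+1) (d+1)"
    and tri0: "\<forall>i\<le>d. \<forall>j\<le>d. (i + 1 < j \<or> j + 1 < i) \<longrightarrow> Es i * A * Es j = 0\<^sub>m (d+1) (d+1)"
    and tri1: "\<forall>i\<le>d. \<forall>j\<le>d. (i = j + 1 \<or> j = i + 1) \<longrightarrow> Es i * A * Es j \<noteq> 0\<^sub>m (d+1) (d+1)"
    and th_distinct: "inj_on th {..d}"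
    and th_eig: "\<forall>i\<le>d. eigenvalue A (th i)"
    and E_prim: "\<forall>i\<le>d. eig_projection d A th i (E i)"
    and bipartite: "\<forall>i\<le>d. mat_trace (Es i * A) = 0"
    and ths_distinct: "inj_on ths {..d}"
    and As_def: "As = lincomb_mat (d+1) ths Es {..d}"
    and E0_norm: "normalizing d A Es (th 0)"
    and adj01: "E 0 * As * E 1 \<noteq> 0\<^sub>m (d+1) (d+1)"
    and nonadj: "\<forall>j\<le>d. j \<noteq> 0 \<and> j \<noteq> 1 \<longrightarrow> E 0 * As * E j = 0\<^sub>m (d+1) (d+1)"
    and v_basis: "adapted_basis d Es v"
    and Y_rep: "represents d A v Y"
    and \<alpha>0: "\<alpha> 0 = 1"
    and \<alpha>_rec: "\<forall>i<d. (if i = 0 then 0 else Y i (i - 1)) * \<alpha> (i - 1) + Y i (i + 1) * \<alpha> (i + 1) = th 0 * \<alpha> i"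
  shows "\<forall>i. 1 \<le> i \<and> i \<le> d - 1 \<longrightarrow>
           Y i (i + 1) = (th 1 * (ths i - ths 0) - th 0 * (ths (i - 1) - ths 1)) / (ths (i + 1) - ths (i - 1)) * (\<alpha> i / \<alpha> (i + 1)) \<and>
           Y i (i - 1) = (th 0 * (ths (i + 1) - ths 1) - th 1 * (ths i - ths 0)) / (ths (i + 1) - ths (i - 1)) * (\<alpha> i / \<alpha> (i - 1))"
proof -
  define n where "n = d+1"
  have d1: "d \<ge> 1" using d3 by simp
  have vc: "v i \<in> carrier_vec n" if "i \<le> d" for i using v_basis that n_def by (auto simp: adapted_basis_def)
  have vnz: "v i \<noteq> 0\<^sub>v n" if "i \<le> d" for i using v_basis that n_def by (auto simp: adapted_basis_def)
  have Esc: "Es i \<in> carrier_mat n n" if "i \<le> d" for i using Es_carrier that n_def by auto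
  have Ac: "A \<in> carrier_mat n n" using A_carrier n_def by simp
  have smult_cancel: "a = 0" if h: "a \<cdot>\<^sub>v x = 0\<^sub>v n" "x \<in> carrier_vec n" "x \<noteq> 0\<^sub>v n" for a :: 'a and x
  proof -
    obtain r where r: "r < n" "x $ r \<noteq> 0" using h(2,3) by (metis carrier_vecD eq_vecI index_zero_vec(1,2))
    have "(a \<cdot>\<^sub>v x) $ r = 0" using h(1) r by simp
    thus ?thesis using r h(2) by simp
  qed
  have Es_adapt: "Es i *\<^sub>v u k = (if i = k then u k else 0\<^sub>v n)"
    if h: "adapted_basis d Es u" "i \<le> d" "k \<le> d" for u i k
  proof -
    obtain w where w: "w \<in> carrier_vec n" "u k = Es k *\<^sub>v w"
      using h Esc[of k] by (auto simp: adapted_basis_def in_image_def)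
    have "Es i *\<^sub>v u k = (Es i * Es k) *\<^sub>v w" using w by (simp add: assoc_mult_mat_vec[OF Esc[OF h(2)] Esc[OF h(3)] w(1)])
    also have "\<dots> = (if i = k then u k else 0\<^sub>v n)"
      using Es_orth h w n_def by auto
    finally show ?thesis .
  qed
  have Es_lincomb: "Es i *\<^sub>v lincomb_vec n c u {..d} = c i \<cdot>\<^sub>v u i"
    if "adapted_basis d Es u" "i \<le> d" for u c i
  proof -
    have uc: "\<forall>k\<in>{..d}. u k \<in> carrier_vec n" using that n_def by (auto simp: adapted_basis_def)
    have "Es i *\<^sub>v lincomb_vec n c u {..d} = lincomb_vec n c (\<lambda>k. Es i *\<^sub>v u k) {..d}"
      by (rule mat_lincomb[OF Esc[OF that(2)] uc])
    also have "\<dots> = c i \<cdot>\<^sub>v (Es i *\<^sub>v u i)"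
      by (rule lincomb_single) (use that Es_adapt uc in auto)
    also have "\<dots> = c i \<cdot>\<^sub>v u i" using Es_adapt that by simp
    finally show ?thesis .
  qed
  define M where "M = mat n n (\<lambda>(r,i). v i $ r)"
  have Mc: "M \<in> carrier_mat n n" by (simp add: M_def)
  have Mvec: "M *\<^sub>v \<xi> = lincomb_vec n (\<lambda>i. \<xi> $ i) v {..d}" if "\<xi> \<in> carrier_vec n" for \<xi>
  proof (rule eq_vecI)
    fix r assume "r < dim_vec (lincomb_vec n (\<lambda>i. \<xi> $ i) v {..d})"
    hence r: "r < n" by simp
    have "(M *\<^sub>v \<xi>) $ r = (\<Sum>i<n. v i $ r * \<xi> $ i)"
      using r that by (simp add: M_def scalar_prod_def lessThan_atLeast0)
    also have "\<dots> = (\<Sum>i\<le>d. \<xi> $ i * v i $ r)" unfolding n_def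
      by (simp add: lessThan_Suc_atMost mult.commute)
    finally show "(M *\<^sub>v \<xi>) $ r = lincomb_vec n (\<lambda>i. \<xi> $ i) v {..d} $ r" using r by simp
  qed (simp add: M_def)
  have Munit: "M *\<^sub>v unit_vec n k = v k" if "k \<le> d" for k
  proof (rule eq_vecI)
    fix r assume "r < dim_vec (v k)"
    hence r: "r < n" using vc[OF that] by (simp add: carrier_vecD)
    show "(M *\<^sub>v unit_vec n k) $ r = v k $ r" using r that n_def by (simp add: M_def)
  qed (use vc[OF that] in \<open>simp add: M_def carrier_vecD\<close>)
  have Mindep: "\<xi> = 0\<^sub>v n" if "\<xi> \<in> carrier_vec n" "M *\<^sub>v \<xi> = 0\<^sub>v n" for \<xi>
  proof (rule eq_vecI)
    fix i assume "i < dim_vec (0\<^sub>v n :: 'a vec)"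
    hence i: "i \<le> d" "i < n" using n_def by auto
    have "Es i *\<^sub>v (M *\<^sub>v \<xi>) = \<xi> $ i \<cdot>\<^sub>v v i" using Mvec[OF that(1)] Es_lincomb[OF v_basis i(1)] by simp
    moreover have "Es i *\<^sub>v (M *\<^sub>v \<xi>) = 0\<^sub>v n" using that(2) Esc[OF i(1)] by simp
    ultimately have "\<xi> $ i = 0" using smult_cancel vc vnz i by metis
    thus "\<xi> $ i = 0\<^sub>v n $ i" using i by simp
  qed (use that in auto)
  have detM: "det M \<noteq> 0" using Mindep det_0_iff_vec_prod_zero[OF Mc] by blast
  define C where "C = (1 / det M) \<cdot>\<^sub>m adj_mat M"
  have Cc: "C \<in> carrier_mat n n" using adj_mat(1)[OF Mc] by (simp add: C_def)
  have CM: "C * M = 1\<^sub>m n"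
    unfolding C_def mult_smult_assoc_mat[OF adj_mat(1)[OF Mc] Mc] adj_mat(3)[OF Mc]
    using detM by (intro eq_matI) auto
  have MC: "M * C = 1\<^sub>m n"
    unfolding C_def mult_smult_distrib[OF Mc adj_mat(1)[OF Mc]] adj_mat(2)[OF Mc]
    using detM by (intro eq_matI) auto
  define co where "co x i = (C *\<^sub>v x) $ i" for x i
  have recon: "x = lincomb_vec n (co x) v {..d}" if "x \<in> carrier_vec n" for x
  proof -
    have "x = (M * C) *\<^sub>v x" using MC that by simp
    also have "\<dots> = M *\<^sub>v (C *\<^sub>v x)" using Mc Cc that by simp
    also have "\<dots> = lincomb_vec n (co x) v {..d}" using Mvec[of "C *\<^sub>v x"] Cc that
      by (simp add: co_def[abs_def])
    finally show ?thesis .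
  qed
  have co_v: "co (v k) i = (if i = k then 1 else 0)" if "k \<le> d" "i \<le> d" for i k
  proof -
    have "C *\<^sub>v v k = (C * M) *\<^sub>v unit_vec n k" using Munit[OF that(1)] Cc Mc by simp
    thus ?thesis using CM that n_def by (simp add: co_def)
  qed
  have co_add: "co (x + y) i = co x i + co y i" if "x \<in> carrier_vec n" "y \<in> carrier_vec n" "i \<le> d" for x y i
    using that Cc n_def by (simp add: co_def mult_add_distrib_mat_vec)
  have co_smult: "co (a \<cdot>\<^sub>v x) i = a * co x i" if "x \<in> carrier_vec n" "i \<le> d" for x i a
    using that Cc n_def by (simp add: co_def mult_mat_vec)
  have co_zero: "co (0\<^sub>v n) i = 0" if "i \<le> d" for i
    using that Cc n_def by (simp add: co_def)
  have co_lincomb: "co (lincomb_vec n c w S) i = (\<Sum>k\<in>S. c k * co (w k) i)"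
    if "\<forall>k\<in>S. w k \<in> carrier_vec n" "i \<le> d" for c w S i
  proof -
    have i: "i < n" using that n_def by simp
    show ?thesis unfolding co_def mat_lincomb[OF Cc that(1)] lincomb_index[OF i] ..
  qed
  have co_eq: "x = y" if "x \<in> carrier_vec n" "y \<in> carrier_vec n" "\<forall>i\<le>d. co x i = co y i" for x y
  proof -
    have "lincomb_vec n (co x) v {..d} = lincomb_vec n (co y) v {..d}"
      unfolding lincomb_vec_def using that(3) by (intro eq_vecI) auto
    thus ?thesis using recon that by metis
  qed
  have co_sub: "co (x - y) i = co x i - co y i" if "x \<in> carrier_vec n" "y \<in> carrier_vec n" "i \<le> d" for x y i
    using that Cc n_def by (simp add: co_def mult_minus_distrib_mat_vec)
  have co_lv: "co (lincomb_vec n c v {..d}) i = c i" if "i \<le> d" for c i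
  proof -
    have "co (lincomb_vec n c v {..d}) i = (\<Sum>k\<in>{..d}. c k * co (v k) i)"
      using co_lincomb vc that by auto
    also have "\<dots> = (\<Sum>k\<in>{..d}. if k = i then c k else 0)" using co_v that by (intro sum.cong) auto
    also have "\<dots> = c i" using that by (simp add: sum.delta')
    finally show ?thesis .
  qed
  have Avc: "A *\<^sub>v v j = lincomb_vec n (\<lambda>i. Y i j) v {..d}" if "j \<le> d" for j
    using Y_rep that n_def by (simp add: represents_def)
  have co_Av: "co (A *\<^sub>v v j) i = Y i j" if "i \<le> d" "j \<le> d" for i j
    using Avc[OF that(2)] co_lv[OF that(1)] by simp
  have co_A: "co (A *\<^sub>v x) i = (\<Sum>j\<le>d. Y i j * co x j)" if "x \<in> carrier_vec n" "i \<le> d" for x i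
  proof -
    have "A *\<^sub>v lincomb_vec n (co x) v {..d} = lincomb_vec n (co x) (\<lambda>j. A *\<^sub>v v j) {..d}"
      by (rule mat_lincomb[OF Ac]) (use vc in auto)
    hence "A *\<^sub>v x = lincomb_vec n (co x) (\<lambda>j. A *\<^sub>v v j) {..d}"
      using recon[OF that(1)] by simp
    moreover have "co (lincomb_vec n (co x) (\<lambda>j. A *\<^sub>v v j) {..d}) i = (\<Sum>j\<le>d. co x j * co (A *\<^sub>v v j) i)"
      using co_lincomb that(2) vc Ac by auto
    ultimately show ?thesis using co_Av that(2) by (simp add: mult.commute)
  qed
  have Es_x: "Es i *\<^sub>v x = co x i \<cdot>\<^sub>v v i" if "x \<in> carrier_vec n" "i \<le> d" for x i
    using recon[OF that(1)] Es_lincomb[OF v_basis that(2)] by metis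
  have co_As: "co (As *\<^sub>v x) i = ths i * co x i" if "x \<in> carrier_vec n" "i \<le> d" for x i
  proof -
    have "As *\<^sub>v x = lincomb_vec n ths (\<lambda>k. Es k *\<^sub>v x) {..d}"
      unfolding As_def n_def[symmetric] using Esc that by (intro lincomb_mat_vec) auto
    also have "\<dots> = lincomb_vec n ths (\<lambda>k. co x k \<cdot>\<^sub>v v k) {..d}"
      unfolding lincomb_vec_def using Es_x that by (intro eq_vecI) auto
    finally have "co (As *\<^sub>v x) i = (\<Sum>k\<in>{..d}. ths k * co (co x k \<cdot>\<^sub>v v k) i)"
      using co_lincomb vc that by auto
    also have "\<dots> = (\<Sum>k\<in>{..d}. if k = i then ths k * co x k else 0)"
      using co_v co_smult vc that by (intro sum.cong) auto
    also have "\<dots> = ths i * co x i" using that by (simp add: sum.delta')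
    finally show ?thesis .
  qed
  have EsAv: "Es i *\<^sub>v (A *\<^sub>v v j) = Y i j \<cdot>\<^sub>v v i" if "i \<le> d" "j \<le> d" for i j
    using Es_x[of "A *\<^sub>v v j" i] co_Av that Ac vc by auto
  have Yz: "Y i j = 0" if "i \<le> d" "j \<le> d" "i + 1 < j \<or> j + 1 < i" for i j
  proof -
    have "(Es i * A * Es j) *\<^sub>v v j = Es i *\<^sub>v (A *\<^sub>v (Es j *\<^sub>v v j))"
      using Esc that Ac vc by (intro mat3_vec) auto
    also have "\<dots> = Y i j \<cdot>\<^sub>v v i" using Es_adapt[OF v_basis that(2) that(2)] EsAv that by simp
    finally have "Y i j \<cdot>\<^sub>v v i = 0\<^sub>v n" using tri0 that n_def vc by auto
    thus ?thesis using smult_cancel vc vnz that by metis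
  qed
  have Ynz: "Y i j \<noteq> 0" if "i \<le> d" "j \<le> d" "i = j + 1 \<or> j = i + 1" for i j
  proof
    assume Y0: "Y i j = 0"
    have "Es i * A * Es j = 0\<^sub>m n n"
    proof (rule mat_zero_if_vec)
      show "Es i * A * Es j \<in> carrier_mat n n" using Esc[OF that(1)] Esc[OF that(2)] Ac by auto
      show "\<forall>x\<in>carrier_vec n. Es i * A * Es j *\<^sub>v x = 0\<^sub>v n"
      proof
        fix x :: "'a vec" assume x: "x \<in> carrier_vec n"
        have "(Es i * A * Es j) *\<^sub>v x = Es i *\<^sub>v (A *\<^sub>v (Es j *\<^sub>v x))"
          using Esc that Ac x by (intro mat3_vec) auto
        also have "\<dots> = Es i *\<^sub>v (A *\<^sub>v (co x j \<cdot>\<^sub>v v j))" using Es_x x that by simp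
        also have "\<dots> = co x j \<cdot>\<^sub>v (Es i *\<^sub>v (A *\<^sub>v v j))"
          using mult_mat_vec[OF Ac vc[OF that(2)]] mult_mat_vec[OF Esc[OF that(1)] mult_mat_vec_carrier[OF Ac vc[OF that(2)]]] by simp
        also have "\<dots> = 0\<^sub>v n" using EsAv[OF that(1,2)] Y0 vc[OF that(1)] by simp
        finally show "Es i * A * Es j *\<^sub>v x = 0\<^sub>v n" .
      qed
    qed
    thus False using tri1 that n_def by auto
  qed
  have Ydiag: "Y i i = 0" if "i \<le> d" for i
  proof -
    have "mat_trace (Es i * A) = (\<Sum>r<n. (Es i * A) $$ (r,r))"
      using Esc[OF that] by (simp add: mat_trace_def carrier_matD)
    also have "\<dots> = (\<Sum>r<n. (\<Sum>j\<le>d. Y i j * C $$ (j,r)) * v i $ r)"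
    proof (rule sum.cong[OF refl])
      fix r assume r: "r \<in> {..<n}"
      have "(Es i * A) $$ (r,r) = ((Es i * A) *\<^sub>v unit_vec n r) $ r"
        using mat_unit_index[of "Es i * A" n r r] Esc[OF that] Ac r by (metis lessThan_iff mult_carrier_mat)
      also have "\<dots> = (Es i *\<^sub>v (A *\<^sub>v unit_vec n r)) $ r" by (simp add: mat2_vec[OF Esc[OF that] Ac])
      also have "\<dots> = co (A *\<^sub>v unit_vec n r) i * v i $ r"
        using Es_x[of "A *\<^sub>v unit_vec n r" i] Ac that r vc[OF that] by (auto simp: carrier_vecD)
      also have "co (A *\<^sub>v unit_vec n r) i = (\<Sum>j\<le>d. Y i j * C $$ (j,r))"
        using co_A[of "unit_vec n r" i] that r Cc n_def by (auto simp: co_def intro!: sum.cong)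
      finally show "(Es i * A) $$ (r,r) = (\<Sum>j\<le>d. Y i j * C $$ (j,r)) * v i $ r" .
    qed
    also have "\<dots> = (\<Sum>j\<le>d. Y i j * (\<Sum>r<n. C $$ (j,r) * v i $ r))"
      by (simp add: sum_distrib_left sum_distrib_right mult.assoc sum.swap[of _ "{..<n}"])
    also have "\<dots> = (\<Sum>j\<le>d. Y i j * co (v i) j)"
    proof (rule sum.cong[OF refl])
      fix j assume j: "j \<in> {..d}"
      have dv: "dim_vec (v i) = n" using vc[OF that] by (simp add: carrier_vecD)
      have "co (v i) j = (\<Sum>r<n. C $$ (j,r) * v i $ r)"
        unfolding co_def using Cc j n_def dv by (auto simp: scalar_prod_def lessThan_atLeast0 intro!: sum.cong)
      thus "Y i j * (\<Sum>r<n. C $$ (j,r) * v i $ r) = Y i j * co (v i) j" by simp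
    qed
    also have "\<dots> = (\<Sum>j\<le>d. if j = i then Y i j else 0)" using co_v that by (intro sum.cong) auto
    also have "\<dots> = Y i i" using that by (simp add: sum.delta')
    finally show ?thesis using bipartite that by simp
  qed
  have Rz: "\<forall>i\<le>d. \<xi> i = 0" if rows: "\<forall>i<d. (\<Sum>j\<le>d. Y i j * \<xi> j) = \<theta> * \<xi> i" and z0: "\<xi> 0 = 0" for \<xi> \<theta>
  proof -
    have "\<forall>j\<le>i. \<xi> j = 0" if "i \<le> d" for i using that
    proof (induction i)
      case 0 then show ?case using z0 by simp
    next
      case (Suc i)
      hence IH: "\<forall>j\<le>i. \<xi> j = 0" and id: "i < d" by auto
      have "(\<Sum>j\<le>d. Y i j * \<xi> j) = (\<Sum>j\<le>d. if j = Suc i then Y i j * \<xi> j else 0)"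
      proof (rule sum.cong[OF refl])
        fix j assume j: "j \<in> {..d}"
        show "Y i j * \<xi> j = (if j = Suc i then Y i j * \<xi> j else 0)"
          using IH Yz[of i j] j id by (cases "j \<le> i"; cases "j = Suc i") auto
      qed
      also have "\<dots> = Y i (Suc i) * \<xi> (Suc i)" using id by (simp add: sum.delta')
      finally have "Y i (Suc i) * \<xi> (Suc i) = 0" using rows id IH by auto
      moreover have "Y i (Suc i) \<noteq> 0" using Ynz[of i "Suc i"] id by auto
      ultimately have "\<xi> (Suc i) = 0" by simp
      thus ?case using IH le_Suc_eq by blast
    qed
    thus ?thesis by blast
  qed
  have rowred: "(\<Sum>j\<le>d. Y i j * f j) = Y i (i-1) * f (i-1) + Y i (i+1) * f (i+1)"
    if i1: "1 \<le> i" and id: "i < d" for i f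
  proof -
    have "(\<Sum>j\<le>d. Y i j * f j) = (\<Sum>j\<le>d. (if j = i-1 then Y i j * f j else 0) + (if j = i+1 then Y i j * f j else 0))"
    proof (rule sum.cong[OF refl])
      fix j assume j: "j \<in> {..d}"
      consider "j = i-1" | "j = i+1" | "j = i" | "i+1 < j \<or> j+1 < i" by arith
      thus "Y i j * f j = (if j = i-1 then Y i j * f j else 0) + (if j = i+1 then Y i j * f j else 0)"
      proof cases
        case 1 thus ?thesis using i1 by simp
      next
        case 2 thus ?thesis using i1 by simp
      next
        case 3 thus ?thesis using i1 Ydiag[of i] id by simp
      next
        case 4
        hence "Y i j = 0" using Yz[of i j] j id by simp
        moreover have "j \<noteq> i-1" "j \<noteq> i+1" using 4 by arith+
        ultimately show ?thesis by simp
      qed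
    qed
    also have "\<dots> = (\<Sum>j\<le>d. if j = i-1 then Y i j * f j else 0) + (\<Sum>j\<le>d. if j = i+1 then Y i j * f j else 0)"
      by (rule sum.distrib)
    also have "\<dots> = Y i (i-1) * f (i-1) + Y i (i+1) * f (i+1)"
      using id by (simp add: sum.delta')
    finally show ?thesis .
  qed
  have rowred0: "(\<Sum>j\<le>d. Y 0 j * f j) = Y 0 1 * f 1" for f
  proof -
    have "(\<Sum>j\<le>d. Y 0 j * f j) = (\<Sum>j\<le>d. if j = 1 then Y 0 j * f j else 0)"
    proof (rule sum.cong[OF refl])
      fix j assume j: "j \<in> {..d}"
      consider "j = 0" | "j = 1" | "1 < j" by arith
      thus "Y 0 j * f j = (if j = 1 then Y 0 j * f j else 0)"
      proof cases
        case 1 thus ?thesis using Ydiag[of 0] by simp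
      next
        case 2 thus ?thesis by simp
      next
        case 3 thus ?thesis using Yz[of 0 j] j by simp
      qed
    qed
    also have "\<dots> = Y 0 1 * f 1" using d1 by (simp add: sum.delta')
    finally show ?thesis .
  qed
  have \<alpha>rows: "\<forall>i<d. (\<Sum>j\<le>d. Y i j * \<alpha> j) = th 0 * \<alpha> i"
  proof (intro allI impI)
    fix i assume i: "i < d"
    show "(\<Sum>j\<le>d. Y i j * \<alpha> j) = th 0 * \<alpha> i"
    proof (cases "i = 0")
      case True thus ?thesis using rowred0 \<alpha>_rec i by auto
    next
      case False thus ?thesis using rowred[of i \<alpha>] \<alpha>_rec i by auto
    qed
  qed
  obtain u' Y' where u'b: "adapted_basis d Es u'" and Y'r: "represents d A u' Y'"
    and Y'sum: "\<forall>i\<le>d. (\<Sum>j\<le>d. Y' i j) = th 0"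
    using E0_norm unfolding normalizing_def by blast
  have u'c: "u' i \<in> carrier_vec n" "u' i \<noteq> 0\<^sub>v n" if "i \<le> d" for i
    using u'b that n_def by (auto simp: adapted_basis_def)
  define w' where "w' = lincomb_vec n (\<lambda>_. 1) u' {..d}"
  have w'c: "w' \<in> carrier_vec n" by (simp add: w'_def)
  have Aw': "A *\<^sub>v w' = th 0 \<cdot>\<^sub>v w'"
  proof -
    have "A *\<^sub>v w' = lincomb_vec n (\<lambda>_. 1) (\<lambda>j. A *\<^sub>v u' j) {..d}"
      unfolding w'_def by (rule mat_lincomb[OF Ac]) (use u'c in auto)
    also have "\<dots> = th 0 \<cdot>\<^sub>v w'"
    proof (rule eq_vecI)
      fix r assume "r < dim_vec (th 0 \<cdot>\<^sub>v w')"
      hence r: "r < n" by (simp add: w'_def)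
      have "lincomb_vec n (\<lambda>_. 1) (\<lambda>j. A *\<^sub>v u' j) {..d} $ r = (\<Sum>j\<le>d. (\<Sum>i\<le>d. Y' i j * u' i $ r))"
        using r Y'r n_def by (simp add: represents_def)
      also have "\<dots> = (\<Sum>i\<le>d. (\<Sum>j\<le>d. Y' i j) * u' i $ r)"
        by (subst sum.swap) (simp add: sum_distrib_right)
      also have "\<dots> = (th 0 \<cdot>\<^sub>v w') $ r" using Y'sum r by (simp add: w'_def sum_distrib_left)
      finally show "lincomb_vec n (\<lambda>_. 1) (\<lambda>j. A *\<^sub>v u' j) {..d} $ r = (th 0 \<cdot>\<^sub>v w') $ r" .
    qed (simp add: w'_def)
    finally show ?thesis .
  qed
  define \<mu> where "\<mu> = co w'"
  have \<mu>rows: "(\<Sum>j\<le>d. Y i j * \<mu> j) = th 0 * \<mu> i" if "i \<le> d" for i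
    using co_A[OF w'c that] Aw' co_smult[OF w'c that] by (simp add: \<mu>_def)
  have \<mu>nz: "\<mu> i \<noteq> 0" if "i \<le> d" for i
  proof
    assume "\<mu> i = 0"
    hence "Es i *\<^sub>v w' = 0\<^sub>v n" using Es_x[OF w'c that] vc[OF that] by (simp add: \<mu>_def)
    moreover have "Es i *\<^sub>v w' = u' i" using Es_lincomb[OF u'b that] u'c[OF that] by (simp add: w'_def)
    ultimately show False using u'c[OF that] by simp
  qed
  have \<mu>\<alpha>: "\<mu> j = \<mu> 0 * \<alpha> j" if "j \<le> d" for j
  proof -
    have "\<forall>i\<le>d. \<mu> i - \<mu> 0 * \<alpha> i = 0"
    proof (rule Rz)
      show "\<forall>i<d. (\<Sum>j\<le>d. Y i j * (\<mu> j - \<mu> 0 * \<alpha> j)) = th 0 * (\<mu> i - \<mu> 0 * \<alpha> i)"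
      proof (intro allI impI)
        fix i assume i: "i < d"
        have "(\<Sum>j\<le>d. Y i j * (\<mu> j - \<mu> 0 * \<alpha> j)) = (\<Sum>j\<le>d. Y i j * \<mu> j) - \<mu> 0 * (\<Sum>j\<le>d. Y i j * \<alpha> j)"
        proof -
          have "(\<Sum>j\<le>d. Y i j * (\<mu> j - \<mu> 0 * \<alpha> j)) = (\<Sum>j\<le>d. Y i j * \<mu> j - \<mu> 0 * (Y i j * \<alpha> j))"
            by (rule sum.cong) (auto simp: algebra_simps)
          also have "\<dots> = (\<Sum>j\<le>d. Y i j * \<mu> j) - (\<Sum>j\<le>d. \<mu> 0 * (Y i j * \<alpha> j))"
            by (rule sum_subtractf)
          also have "\<dots> = (\<Sum>j\<le>d. Y i j * \<mu> j) - \<mu> 0 * (\<Sum>j\<le>d. Y i j * \<alpha> j)"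
            by (simp only: sum_distrib_left)
          finally show ?thesis .
        qed
        thus "(\<Sum>j\<le>d. Y i j * (\<mu> j - \<mu> 0 * \<alpha> j)) = th 0 * (\<mu> i - \<mu> 0 * \<alpha> i)"
          using \<mu>rows[of i] \<alpha>rows i by (simp add: right_diff_distrib)
      qed
      show "\<mu> 0 - \<mu> 0 * \<alpha> 0 = 0" using \<alpha>0 by simp
    qed
    hence "\<mu> j - \<mu> 0 * \<alpha> j = 0" using that by blast
    thus ?thesis by (simp only: right_minus_eq)
  qed
  have \<alpha>nz: "\<alpha> j \<noteq> 0" if "j \<le> d" for j using \<mu>\<alpha>[OF that] \<mu>nz[OF that] by auto
  define u where "u = (1 / \<mu> 0) \<cdot>\<^sub>v w'"
  have uc: "u \<in> carrier_vec n" by (simp add: u_def w'c)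
  have co_u: "co u j = \<alpha> j" if "j \<le> d" for j
    using co_smult[OF w'c that] \<mu>\<alpha>[OF that] \<mu>nz[of 0] by (simp add: u_def \<mu>_def[symmetric])
  have Au: "A *\<^sub>v u = th 0 \<cdot>\<^sub>v u"
    unfolding u_def mult_mat_vec[OF Ac w'c] Aw' by (simp add: smult_smult_assoc mult.commute)
  have unz: "u \<noteq> 0\<^sub>v n" using co_u[of 0] co_zero[of 0] \<alpha>0 by auto
  define k where "k = rec_nat (1::'a) (\<lambda>i ki. ki * Y i (i+1) / Y (i+1) i)"
  have k0: "k 0 = 1" and kS: "k (Suc i) = k i * Y i (i+1) / Y (i+1) i" for i
    by (simp_all add: k_def)
  have knz: "k i \<noteq> 0" if "i \<le> d" for i using that
  proof (induction i)
    case 0 then show ?case by (simp add: k0)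
  next
    case (Suc i) thus ?case using Ynz[of i "Suc i"] Ynz[of "Suc i" i] by (simp add: kS)
  qed
  have ksym: "k i * Y i j = k j * Y j i" if "i \<le> d" "j \<le> d" for i j
  proof -
    consider "i = j" | "j = i+1" | "i = j+1" | "i+1 < j \<or> j+1 < i" by arith
    thus ?thesis
    proof cases
      case 2 thus ?thesis using Ynz[of j i] that by (simp add: kS)
    next
      case 3 thus ?thesis using Ynz[of i j] that by (simp add: kS)
    next
      case 4 thus ?thesis using Yz[of i j] Yz[of j i] that by auto
    qed simp
  qed
  define Bf where "Bf x y = (\<Sum>i\<le>d. k i * co x i * co y i)" for x y
  have Bsym: "Bf x y = Bf y x" for x y unfolding Bf_def by (intro sum.cong) (auto simp: mult_ac)
  have BA: "Bf (A *\<^sub>v x) y = Bf x (A *\<^sub>v y)" if "x \<in> carrier_vec n" "y \<in> carrier_vec n" for x y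
  proof -
    have "Bf (A *\<^sub>v x) y = (\<Sum>i\<le>d. \<Sum>j\<le>d. (k i * Y i j) * co x j * co y i)"
      unfolding Bf_def using co_A that
      by (simp add: sum_distrib_right sum_distrib_left mult_ac)
    also have "\<dots> = (\<Sum>i\<le>d. \<Sum>j\<le>d. (k j * Y j i) * co x j * co y i)"
      using ksym by (intro sum.cong refl) auto
    also have "\<dots> = (\<Sum>j\<le>d. \<Sum>i\<le>d. (k j * Y j i) * co x j * co y i)"
      by (rule sum.swap)
    also have "\<dots> = Bf x (A *\<^sub>v y)"
      unfolding Bf_def using co_A that
      by (simp add: sum_distrib_right sum_distrib_left mult_ac)
    finally show ?thesis .
  qed
  have BAs: "Bf (As *\<^sub>v x) y = Bf x (As *\<^sub>v y)" if "x \<in> carrier_vec n" "y \<in> carrier_vec n" for x y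
    unfolding Bf_def using co_As that by (intro sum.cong) (auto simp: mult_ac)
  have Bsm1: "Bf (a \<cdot>\<^sub>v x) y = a * Bf x y" if "x \<in> carrier_vec n" for x y a
    unfolding Bf_def using co_smult that by (simp add: sum_distrib_left mult_ac)
  have Bsm2: "Bf x (a \<cdot>\<^sub>v y) = a * Bf x y" if "y \<in> carrier_vec n" for x y a
    using Bsm1[OF that] Bsym by metis
  have Bsub2: "Bf x (y - z) = Bf x y - Bf x z" if "y \<in> carrier_vec n" "z \<in> carrier_vec n" for x y z
  proof -
    have "Bf x (y - z) = (\<Sum>i\<le>d. k i * co x i * co y i - k i * co x i * co z i)"
      unfolding Bf_def by (intro sum.cong refl) (simp add: co_sub[OF that] right_diff_distrib)
    thus ?thesis unfolding Bf_def by (simp only: sum_subtractf)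
  qed
  have Bzero2: "Bf x (0\<^sub>v n) = 0" for x unfolding Bf_def using co_zero by simp
  have Blin2: "Bf x (lincomb_vec n c w S) = (\<Sum>m\<in>S. c m * Bf x (w m))"
    if "\<forall>m\<in>S. w m \<in> carrier_vec n" "finite S" for x c w S
  proof -
    have "Bf x (lincomb_vec n c w S) = (\<Sum>i\<le>d. \<Sum>m\<in>S. c m * (k i * co x i * co (w m) i))"
      unfolding Bf_def using co_lincomb[OF that(1)] by (simp add: sum_distrib_left mult_ac)
    also have "\<dots> = (\<Sum>m\<in>S. \<Sum>i\<le>d. c m * (k i * co x i * co (w m) i))" by (rule sum.swap)
    also have "\<dots> = (\<Sum>m\<in>S. c m * Bf x (w m))" unfolding Bf_def by (simp add: sum_distrib_left)
    finally show ?thesis .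
  qed
  have Bnd: "\<exists>t\<in>carrier_vec n. Bf x t \<noteq> 0" if h: "x \<in> carrier_vec n" "x \<noteq> 0\<^sub>v n" for x
  proof -
    obtain i where i: "i \<le> d" "co x i \<noteq> 0"
      using co_eq[OF h(1) zero_carrier_vec] co_zero h(2) by auto
    have "Bf x (v i) = (\<Sum>j\<le>d. if j = i then k i * co x i else 0)"
      unfolding Bf_def using co_v i by (intro sum.cong) auto
    also have "\<dots> = k i * co x i" using i by (simp add: sum.delta')
    finally have "Bf x (v i) \<noteq> 0" using knz[OF i(1)] i(2) by simp
    thus ?thesis using vc[OF i(1)] by blast
  qed
  have th_ne: "th j \<noteq> th m" if "j \<le> d" "m \<le> d" "j \<noteq> m" for j m
    using th_distinct that by (auto simp: inj_on_def)
  have orth: "Bf a b = 0" if "a \<in> carrier_vec n" "b \<in> carrier_vec n" "A *\<^sub>v a = th j \<cdot>\<^sub>v a"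
    "A *\<^sub>v b = th m \<cdot>\<^sub>v b" "j \<le> d" "m \<le> d" "j \<noteq> m" for a b j m
  proof -
    have "th j * Bf a b = th m * Bf a b"
      using BA[OF that(1,2)] that(3,4) Bsm1[OF that(1)] Bsm2[OF that(2)] by simp
    thus ?thesis using th_ne[OF that(5-7)] by simp
  qed
  have rows_of: "(\<Sum>j\<le>d. Y i j * co x j) = \<theta> * co x i"
    if "x \<in> carrier_vec n" "A *\<^sub>v x = \<theta> \<cdot>\<^sub>v x" "i \<le> d" for x \<theta> i
    using co_A[OF that(1,3)] that(2) co_smult[OF that(1,3)] by simp
  have Rprop: "\<xi> i = (\<xi> 0 / \<eta> 0) * \<eta> i"
    if r1: "\<forall>i<d. (\<Sum>j\<le>d. Y i j * \<xi> j) = \<theta> * \<xi> i" and r2: "\<forall>i<d. (\<Sum>j\<le>d. Y i j * \<eta> j) = \<theta> * \<eta> i"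
      and e0: "\<eta> 0 \<noteq> 0" and i: "i \<le> d" for \<xi> \<eta> \<theta> i
  proof -
    define c where "c = \<xi> 0 / \<eta> 0"
    have "\<forall>i\<le>d. \<xi> i - c * \<eta> i = 0"
    proof (rule Rz)
      show "\<forall>i<d. (\<Sum>j\<le>d. Y i j * (\<xi> j - c * \<eta> j)) = \<theta> * (\<xi> i - c * \<eta> i)"
      proof (intro allI impI)
        fix i assume i: "i < d"
        have "(\<Sum>j\<le>d. Y i j * (\<xi> j - c * \<eta> j)) = (\<Sum>j\<le>d. Y i j * \<xi> j - c * (Y i j * \<eta> j))"
          by (rule sum.cong) (auto simp: algebra_simps)
        also have "\<dots> = (\<Sum>j\<le>d. Y i j * \<xi> j) - (\<Sum>j\<le>d. c * (Y i j * \<eta> j))"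
          by (rule sum_subtractf)
        also have "\<dots> = (\<Sum>j\<le>d. Y i j * \<xi> j) - c * (\<Sum>j\<le>d. Y i j * \<eta> j)"
          by (simp only: sum_distrib_left)
        finally show "(\<Sum>j\<le>d. Y i j * (\<xi> j - c * \<eta> j)) = \<theta> * (\<xi> i - c * \<eta> i)"
          using r1 r2 i by (simp add: right_diff_distrib)
      qed
      show "\<xi> 0 - c * \<eta> 0 = 0" using e0 by (simp add: c_def)
    qed
    hence "\<xi> i - c * \<eta> i = 0" using i by blast
    thus ?thesis by (simp only: right_minus_eq c_def)
  qed
  have onedim: "x = (co x 0 / co y 0) \<cdot>\<^sub>v y"
    if hh: "x \<in> carrier_vec n" "y \<in> carrier_vec n" "A *\<^sub>v x = \<theta> \<cdot>\<^sub>v x" "A *\<^sub>v y = \<theta> \<cdot>\<^sub>v y" "y \<noteq> 0\<^sub>v n" for x y \<theta>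
  proof -
    have ry: "\<forall>i<d. (\<Sum>j\<le>d. Y i j * co y j) = \<theta> * co y i" using rows_of[OF hh(2,4)] by simp
    have rx: "\<forall>i<d. (\<Sum>j\<le>d. Y i j * co x j) = \<theta> * co x i" using rows_of[OF hh(1,3)] by simp
    have y0: "co y 0 \<noteq> 0"
    proof
      assume "co y 0 = 0"
      hence "\<forall>i\<le>d. co y i = 0" using Rz[OF ry] by blast
      hence "y = 0\<^sub>v n" using co_eq[OF hh(2) zero_carrier_vec] co_zero by simp
      thus False using hh(5) by simp
    qed
    show ?thesis
    proof (rule co_eq[OF hh(1)])
      show "(co x 0 / co y 0) \<cdot>\<^sub>v y \<in> carrier_vec n" using hh(2) by simp
      show "\<forall>i\<le>d. co x i = co ((co x 0 / co y 0) \<cdot>\<^sub>v y) i"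
      proof (intro allI impI)
        fix i assume i: "i \<le> d"
        have "co x i = (co x 0 / co y 0) * co y i" by (rule Rprop[OF rx ry y0 i])
        also have "\<dots> = co ((co x 0 / co y 0) \<cdot>\<^sub>v y) i" by (rule co_smult[OF hh(2) i, symmetric])
        finally show "co x i = co ((co x 0 / co y 0) \<cdot>\<^sub>v y) i" .
      qed
    qed
  qed
  have Ec: "E j \<in> carrier_mat n n" if "j \<le> d" for j using E_prim that n_def by (auto simp: eig_projection_def)
  have Eeig: "A *\<^sub>v (E j *\<^sub>v t) = th j \<cdot>\<^sub>v (E j *\<^sub>v t)" if "j \<le> d" "t \<in> carrier_vec n" for j t
    using E_prim that n_def by (auto simp: eig_projection_def)
  have Edec: "\<exists>w. (\<forall>m\<le>d. m \<noteq> j \<longrightarrow> w m \<in> carrier_vec n \<and> A *\<^sub>v w m = th m \<cdot>\<^sub>v w m) \<and>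
              t - E j *\<^sub>v t = lincomb_vec n (\<lambda>_. 1) w ({..d} - {j})" if "j \<le> d" "t \<in> carrier_vec n" for j t
    using E_prim that n_def unfolding eig_projection_def by blast
  have Efix: "Bf y t = Bf y (E j *\<^sub>v t)"
    if hh: "j \<le> d" "t \<in> carrier_vec n" "y \<in> carrier_vec n" "A *\<^sub>v y = th j \<cdot>\<^sub>v y" for y t j
  proof -
    obtain w where w: "\<forall>m\<le>d. m \<noteq> j \<longrightarrow> w m \<in> carrier_vec n \<and> A *\<^sub>v w m = th m \<cdot>\<^sub>v w m"
      "t - E j *\<^sub>v t = lincomb_vec n (\<lambda>_. 1) w ({..d} - {j})" using Edec[OF hh(1,2)] by blast
    have "Bf y (t - E j *\<^sub>v t) = (\<Sum>m\<in>{..d}-{j}. 1 * Bf y (w m))"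
      unfolding w(2) by (rule Blin2) (use w(1) in auto)
    also have "\<dots> = 0" using orth[OF hh(3) _ hh(4)] w(1) hh(1) by (intro sum.neutral) auto
    finally show ?thesis using Bsub2[OF hh(2) mult_mat_vec_carrier[OF Ec[OF hh(1)] hh(2)]] by simp
  qed
  have Asc: "As \<in> carrier_mat n n" by (simp add: As_def lincomb_mat_def n_def)
  have "\<forall>j\<le>d. \<exists>x. x \<in> carrier_vec n \<and> x \<noteq> 0\<^sub>v n \<and> A *\<^sub>v x = th j \<cdot>\<^sub>v x"
    using th_eig Ac by (auto simp: eigenvalue_def eigenvector_def carrier_matD)
  then obtain y where y: "\<forall>j\<le>d. y j \<in> carrier_vec n \<and> y j \<noteq> 0\<^sub>v n \<and> A *\<^sub>v y j = th j \<cdot>\<^sub>v y j"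
    by metis
  have yc: "y j \<in> carrier_vec n" and ynz: "y j \<noteq> 0\<^sub>v n" and Ay: "A *\<^sub>v y j = th j \<cdot>\<^sub>v y j" if "j \<le> d" for j
    using y that by auto
  have Egood: "(\<exists>t\<in>carrier_vec n. \<exists>c. c \<noteq> 0 \<and> E j *\<^sub>v t = c \<cdot>\<^sub>v y j) \<and> Bf (y j) (y j) \<noteq> 0" if j: "j \<le> d" for j
  proof -
    obtain t where t: "t \<in> carrier_vec n" "Bf (y j) t \<noteq> 0" using Bnd[OF yc[OF j] ynz[OF j]] by blast
    have Et: "E j *\<^sub>v t \<in> carrier_vec n" using Ec[OF j] t(1) by simp
    have "Bf (y j) (E j *\<^sub>v t) \<noteq> 0" using Efix[OF j t(1) yc[OF j] Ay[OF j]] t(2) by simp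
    moreover have "E j *\<^sub>v t = (co (E j *\<^sub>v t) 0 / co (y j) 0) \<cdot>\<^sub>v y j"
      by (rule onedim[OF Et yc[OF j] Eeig[OF j t(1)] Ay[OF j] ynz[OF j]])
    ultimately show ?thesis using t(1) Bsm2[OF yc[OF j]] by (metis mult_zero_left mult_zero_right)
  qed
  have E5: "E 0 *\<^sub>v (As *\<^sub>v y j) = 0\<^sub>v n" if j: "2 \<le> j" "j \<le> d" for j
  proof -
    obtain t c where t: "t \<in> carrier_vec n" "c \<noteq> 0" "E j *\<^sub>v t = c \<cdot>\<^sub>v y j" using Egood[OF j(2)] by blast
    have X: "E 0 *\<^sub>v (As *\<^sub>v y j) \<in> carrier_vec n" using Ec[of 0] Asc yc[OF j(2)] by simp
    have "(E 0 * As * E j) *\<^sub>v t = 0\<^sub>v n" using nonadj j t(1) n_def by simp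
    moreover have "(E 0 * As * E j) *\<^sub>v t = E 0 *\<^sub>v (As *\<^sub>v (E j *\<^sub>v t))"
      by (rule mat3_vec[OF Ec[of 0] Asc Ec[OF j(2)] t(1)]) simp
    moreover have "E 0 *\<^sub>v (As *\<^sub>v (c \<cdot>\<^sub>v y j)) = c \<cdot>\<^sub>v (E 0 *\<^sub>v (As *\<^sub>v y j))"
      using mult_mat_vec[OF Asc yc[OF j(2)]] mult_mat_vec[OF Ec[of 0] mult_mat_vec_carrier[OF Asc yc[OF j(2)]]]
      by simp
    ultimately have "c \<cdot>\<^sub>v (E 0 *\<^sub>v (As *\<^sub>v y j)) = 0\<^sub>v n" using t(3) by simp
    thus ?thesis using smult_cancel[OF _ X] t(2) by blast
  qed
  define z where "z = As *\<^sub>v u"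
  have zc: "z \<in> carrier_vec n" using Asc uc by (simp add: z_def)
  have Bz: "Bf z (y j) = 0" if j: "2 \<le> j" "j \<le> d" for j
  proof -
    have "Bf z (y j) = Bf u (As *\<^sub>v y j)" unfolding z_def by (rule BAs[OF uc yc[OF j(2)]])
    also have "\<dots> = Bf u (E 0 *\<^sub>v (As *\<^sub>v y j))"
      by (rule Efix) (use Asc yc[OF j(2)] uc Au in auto)
    also have "\<dots> = 0" using E5[OF j] Bzero2 by simp
    finally show ?thesis .
  qed
  obtain w where w: "\<forall>m\<le>d. m \<noteq> 0 \<longrightarrow> w m \<in> carrier_vec n \<and> A *\<^sub>v w m = th m \<cdot>\<^sub>v w m"
    "z - E 0 *\<^sub>v z = lincomb_vec n (\<lambda>_. 1) w ({..d} - {0})" using Edec[of 0 z] zc by blast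
  define p where "p = E 0 *\<^sub>v z"
  have pc: "p \<in> carrier_vec n" using Ec[of 0] zc by (simp add: p_def)
  have Ap: "A *\<^sub>v p = th 0 \<cdot>\<^sub>v p" unfolding p_def by (rule Eeig) (use zc in auto)
  have wz: "w m = 0\<^sub>v n" if m: "2 \<le> m" "m \<le> d" for m
  proof -
    have wm: "w m \<in> carrier_vec n" "A *\<^sub>v w m = th m \<cdot>\<^sub>v w m" using w(1) m by auto
    have wmy: "w m = (co (w m) 0 / co (y m) 0) \<cdot>\<^sub>v y m"
      by (rule onedim[OF wm(1) yc[OF m(2)] wm(2) Ay[OF m(2)] ynz[OF m(2)]])
    have "Bf (y m) (z - p) = Bf (y m) z - Bf (y m) p" by (rule Bsub2[OF zc pc])
    also have "Bf (y m) z = 0" using Bz[OF m] Bsym by metis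
    also have "Bf (y m) p = 0" by (rule orth[OF yc[OF m(2)] pc Ay[OF m(2)] Ap]) (use m in auto)
    finally have "Bf (y m) (z - p) = 0" by simp
    moreover have "Bf (y m) (z - p) = (\<Sum>k\<in>{..d}-{0}. 1 * Bf (y m) (w k))"
      unfolding p_def w(2) by (rule Blin2) (use w(1) in auto)
    moreover have "(\<Sum>k\<in>{..d}-{0}. 1 * Bf (y m) (w k)) = Bf (y m) (w m) + (\<Sum>k\<in>{..d}-{0}-{m}. 1 * Bf (y m) (w k))"
      using m by (subst sum.remove[of _ m]) auto
    moreover have "(\<Sum>k\<in>{..d}-{0}-{m}. 1 * Bf (y m) (w k)) = 0"
    proof (rule sum.neutral, intro ballI)
      fix k assume k: "k \<in> {..d}-{0}-{m}"
      have wk: "w k \<in> carrier_vec n" "A *\<^sub>v w k = th k \<cdot>\<^sub>v w k" using w(1) k by auto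
      have "Bf (y m) (w k) = 0" by (rule orth[OF yc[OF m(2)] wk(1) Ay[OF m(2)] wk(2)]) (use k m in auto)
      thus "1 * Bf (y m) (w k) = 0" by simp
    qed
    ultimately have "Bf (y m) (w m) = 0" by simp
    hence "(co (w m) 0 / co (y m) 0) * Bf (y m) (y m) = 0" using wmy Bsm2[OF yc[OF m(2)]] by metis
    hence h0: "co (w m) 0 / co (y m) 0 = 0" using Egood[OF m(2)] by simp
    have "w m = 0 \<cdot>\<^sub>v y m" using wmy unfolding h0 by assumption
    thus ?thesis using yc[OF m(2)] by simp
  qed
  define q where "q = w 1"
  have qc: "q \<in> carrier_vec n" and Aq: "A *\<^sub>v q = th 1 \<cdot>\<^sub>v q" using w(1) d1 by (auto simp: q_def)
  have zpq: "z - p = q"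
  proof -
    have "lincomb_vec n (\<lambda>_. 1) w ({..d} - {0}) = 1 \<cdot>\<^sub>v w 1"
      by (rule lincomb_single) (use d1 wz qc q_def in auto)
    thus ?thesis using w(2) qc by (simp add: p_def q_def)
  qed
  have co_z: "co z i = co p i + co q i" if "i \<le> d" for i
    using co_sub[OF zc pc that] zpq by simp
  have co_p: "co p i = co p 0 * \<alpha> i" if "i \<le> d" for i
  proof -
    have r1: "\<forall>i<d. (\<Sum>j\<le>d. Y i j * co p j) = th 0 * co p i" using rows_of[OF pc Ap] by simp
    show ?thesis using Rprop[OF r1 \<alpha>rows _ that] \<alpha>0 by simp
  qed
  define \<kappa> where "\<kappa> = (th 0 - th 1) * co p 0"
  have key: "(\<Sum>j\<le>d. Y i j * (ths j * \<alpha> j)) - th 1 * (ths i * \<alpha> i) = \<kappa> * \<alpha> i" if i: "i \<le> d" for i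
  proof -
    have "(\<Sum>j\<le>d. Y i j * (ths j * \<alpha> j)) = (\<Sum>j\<le>d. Y i j * co p j + Y i j * co q j)"
      using co_z co_As[OF uc] co_u unfolding z_def by (intro sum.cong refl) (auto simp: algebra_simps)
    also have "\<dots> = (\<Sum>j\<le>d. Y i j * co p j) + (\<Sum>j\<le>d. Y i j * co q j)" by (rule sum.distrib)
    also have "\<dots> = th 0 * co p i + th 1 * co q i" using rows_of[OF pc Ap i] rows_of[OF qc Aq i] by simp
    finally have "(\<Sum>j\<le>d. Y i j * (ths j * \<alpha> j)) = th 0 * co p i + th 1 * co q i" .
    moreover have "ths i * \<alpha> i = co p i + co q i"
      using co_z[OF i] co_As[OF uc i] co_u[OF i] unfolding z_def by simp
    ultimately show ?thesis using co_p[OF i] by (simp add: \<kappa>_def algebra_simps)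
  qed
  have \<kappa>v: "\<kappa> = th 0 * ths 1 - th 1 * ths 0"
  proof -
    have h1: "Y 0 1 * (ths 1 * \<alpha> 1) - th 1 * (ths 0 * \<alpha> 0) = \<kappa> * \<alpha> 0"
      using key[of 0] rowred0[of "\<lambda>j. ths j * \<alpha> j"] by simp
    have h2: "Y 0 1 * \<alpha> 1 = th 0" using \<alpha>_rec[rule_format, of 0] d1 \<alpha>0 by simp
    have h3: "Y 0 1 * (ths 1 * \<alpha> 1) = ths 1 * th 0" using h2 mult.left_commute by metis
    have "\<kappa> = Y 0 1 * (ths 1 * \<alpha> 1) - th 1 * (ths 0 * \<alpha> 0)" using h1 \<alpha>0 by simp
    also have "\<dots> = ths 1 * th 0 - th 1 * ths 0" using h3 \<alpha>0 by simp
    finally show ?thesis by (simp add: mult.commute)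
  qed
  show ?thesis
  proof (intro allI impI)
    fix i assume i: "1 \<le> i \<and> i \<le> d - 1"
    hence i1: "1 \<le> i" and id: "i < d" using d1 by auto
    have eq1: "Y i (i-1) * \<alpha> (i-1) + Y i (i+1) * \<alpha> (i+1) = th 0 * \<alpha> i"
      using \<alpha>_rec id i1 by auto
    have eq2: "Y i (i-1) * (ths (i-1) * \<alpha> (i-1)) + Y i (i+1) * (ths (i+1) * \<alpha> (i+1)) - th 1 * (ths i * \<alpha> i) = \<kappa> * \<alpha> i"
      using key[of i] rowred[OF i1 id, of "\<lambda>j. ths j * \<alpha> j"] id by simp
    have D: "ths (i+1) - ths (i-1) \<noteq> 0"
      proof -
      have "i+1 \<noteq> i-1" "i+1 \<in> {..d}" "i-1 \<in> {..d}" using id by auto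
      thus ?thesis using inj_onD[OF ths_distinct, of "i+1" "i-1"] by auto
    qed
    have ap: "\<alpha> (i+1) \<noteq> 0" using \<alpha>nz id by simp
    have am: "\<alpha> (i-1) \<noteq> 0" using \<alpha>nz id by simp
    have hb: "Y i (i+1) * \<alpha> (i+1) * (ths (i+1) - ths (i-1)) = (th 1 * (ths i - ths 0) - th 0 * (ths (i-1) - ths 1)) * \<alpha> i"
    proof -
      have "Y i (i+1) * \<alpha> (i+1) * (ths (i+1) - ths (i-1)) =
        (Y i (i-1) * (ths (i-1) * \<alpha> (i-1)) + Y i (i+1) * (ths (i+1) * \<alpha> (i+1))) - ths (i-1) * (Y i (i-1) * \<alpha> (i-1) + Y i (i+1) * \<alpha> (i+1))"
        by (simp add: algebra_simps)
      also have "\<dots> = (\<kappa> * \<alpha> i + th 1 * (ths i * \<alpha> i)) - ths (i-1) * (th 0 * \<alpha> i)"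
        using eq1 eq2 by (simp add: algebra_simps)
      finally show ?thesis using \<kappa>v by (simp add: algebra_simps)
    qed
    have hc: "Y i (i-1) * \<alpha> (i-1) * (ths (i+1) - ths (i-1)) = (th 0 * (ths (i+1) - ths 1) - th 1 * (ths i - ths 0)) * \<alpha> i"
    proof -
      have "Y i (i-1) * \<alpha> (i-1) * (ths (i+1) - ths (i-1)) =
        ths (i+1) * (Y i (i-1) * \<alpha> (i-1) + Y i (i+1) * \<alpha> (i+1)) - (Y i (i-1) * (ths (i-1) * \<alpha> (i-1)) + Y i (i+1) * (ths (i+1) * \<alpha> (i+1)))"
        by (simp add: algebra_simps)
      also have "\<dots> = ths (i+1) * (th 0 * \<alpha> i) - (\<kappa> * \<alpha> i + th 1 * (ths i * \<alpha> i))"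
        using eq1 eq2 by (simp add: algebra_simps)
      finally show ?thesis using \<kappa>v by (simp add: algebra_simps)
    qed
    show "Y i (i + 1) = (th 1 * (ths i - ths 0) - th 0 * (ths (i - 1) - ths 1)) / (ths (i + 1) - ths (i - 1)) * (\<alpha> i / \<alpha> (i + 1)) \<and>
           Y i (i - 1) = (th 0 * (ths (i + 1) - ths 1) - th 1 * (ths i - ths 0)) / (ths (i + 1) - ths (i - 1)) * (\<alpha> i / \<alpha> (i - 1))"
    proof
      show "Y i (i + 1) = (th 1 * (ths i - ths 0) - th 0 * (ths (i - 1) - ths 1)) / (ths (i + 1) - ths (i - 1)) * (\<alpha> i / \<alpha> (i + 1))"
        using hb D ap by (simp add: field_simps)
      show "Y i (i - 1) = (th 0 * (ths (i + 1) - ths 1) - th 1 * (ths i - ths 0)) / (ths (i + 1) - ths (i - 1)) * (\<alpha> i / \<alpha> (i - 1))"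
        using hc D am by (simp add: field_simps)
    qed
  qed
qed

end
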